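(* Let $p\ge1$ be an integer. For every $\bm U^0\in\mathbb V_h$ the equation $(\bm I+\mathbb A^2)\frac{\bm U^1-\bm U^0}{\tau}+\mathbb D(\bm U^0)\frac{\bm U^1+\bm U^0}{2}=0$ has a unique solution $\bm U^1\in\mathbb V_h$, and for every $n\ge1$ and all given $\bm U^{n-1},\bm U^n\in\mathbb V_h$ the equation $(\bm I+\mathbb A^2)\frac{\bm U^{n+1}-\bm U^n}{\tau}+\mathbb D\big(\frac{3\bm U^n-\bm U^{n-1}}{2}\big)\frac{\bm U^{n+1}+\bm U^n}{2}=0$ has a unique solution $\bm U^{n+1}\in\mathbb V_h$. That is, the LCN-MP scheme is uniquely solvable.
   Context: $\Omega=[x_L,x_R]\times[y_L,y_R]$, $l_1=x_R-x_L$, $l_2=y_R-y_L$, $N_1,N_2$ even, $h_r=l_r/N_r$, grid points $x_{j_1}=x_L+j_1h_1$, $y_{j_2}=y_L+j_2h_2$, $0\le j_r\le N_r-1$; $\tau>0$. $\mathbb V_h$ is the space of doubly periodic grid functions identified with vectors $\bm U=(U_{0,0},U_{1,0},\dots,U_{N_1-1,0},U_{0,1},\dots,U_{N_1-1,N_2-1})^T$. For $r=1,2$, $\mu_r=2\pi/l_r$, $g^{(1)}_k(x)=\frac1{N_1}\sum_{l=-N_1/2}^{N_1/2}\frac1{a_l}e^{\mathrm il\mu_1(x-x_k)}$, $a_l=1$ for $|l|<N_1/2$, $a_{\pm N_1/2}=2$ (similarly $g^{(2)}_k(y)$). $\bm D_s^x=(\frac{d^s}{dx^s}g^{(1)}_k(x_j))_{j,k=0}^{N_1-1}$,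 $\bm D_s^y=(\frac{d^s}{dy^s}g^{(2)}_k(y_j))_{j,k=0}^{N_2-1}$. $\mathbb A=\bm I_{N_2}\otimes\bm D_2^x+\bm D_2^y\otimes\bm I_{N_1}$, $\mathbb B=\bm I_{N_2}\otimes\bm D_3^x+\bm D_2^y\otimes\bm D_1^x$, $\mathbb L_h=\bm I_{N_2}\otimes\bm D_1^x+\bm D_1^y\otimes\bm I_{N_1}$ ($\otimes$ Kronecker product), $\mathbb D(\bm W)=\mathbb B+\mathbb L_h+\frac1{p+2}(\mathrm{diag}(\bm W^p)\mathbb L_h+\mathbb L_h\mathrm{diag}(\bm W^p))$ with $\bm W^p$ the componentwise power. *)

theory Defs
  imports "HOL-Analysis.Analysis"
begin

text \<open>Grid functions on an N1 x N2 periodic grid are vectors of length N = N1*N2, represented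
  as functions nat => real vanishing at indices >= N; U_{j1,j2} is stored at index j1 + N1*j2.
  Square matrices are functions nat => nat => real (only indices < size are meaningful).\<close>

definition Vh :: "nat \<Rightarrow> (nat \<Rightarrow> real) set" where
  "Vh N = {U. \<forall>i\<ge>N. U i = 0}"

definition a_coef :: "nat \<Rightarrow> int \<Rightarrow> real" where
  "a_coef N l = (if \<bar>l\<bar> = int N div 2 then 2 else 1)"

text \<open>Trigonometric interpolation basis g_k(x) on an interval of length len with N points,
  centred at node xk (it is real-valued; we take the real part of the defining complex sum).\<close>
definition trig_basis :: "real \<Rightarrow> nat \<Rightarrow> real \<Rightarrow> real \<Rightarrow> real" where
  "trig_basis len N xk x = Re ((1 / of_nat N) *
     (\<Sum>l\<in>{- (int N div 2) .. int N div 2}.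
        (1 / complex_of_real (a_coef N l)) *
        exp (\<i> * of_int l * complex_of_real (2 * pi / len) * complex_of_real (x - xk))))"

definition diff_mat :: "nat \<Rightarrow> real \<Rightarrow> real \<Rightarrow> nat \<Rightarrow> nat \<Rightarrow> nat \<Rightarrow> real" where
  "diff_mat s L R N j k =
     (let node = (\<lambda>m. L + real m * ((R - L) / real N))
      in (deriv ^^ s) (trig_basis (R - L) N (node k)) (node j))"

definition idm :: "nat \<Rightarrow> nat \<Rightarrow> real" where
  "idm i j = (if i = j then 1 else 0)"

definition kron :: "nat \<Rightarrow> (nat \<Rightarrow> nat \<Rightarrow> real) \<Rightarrow> (nat \<Rightarrow> nat \<Rightarrow> real) \<Rightarrow> nat \<Rightarrow> nat \<Rightarrow> real" where
  "kron n A B i j = A (i div n) (j div n) * B (i mod n) (j mod n)"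

definition matmul :: "nat \<Rightarrow> (nat \<Rightarrow> nat \<Rightarrow> real) \<Rightarrow> (nat \<Rightarrow> nat \<Rightarrow> real) \<Rightarrow> nat \<Rightarrow> nat \<Rightarrow> real" where
  "matmul n A B i j = (\<Sum>k<n. A i k * B k j)"

definition matvec :: "nat \<Rightarrow> (nat \<Rightarrow> nat \<Rightarrow> real) \<Rightarrow> (nat \<Rightarrow> real) \<Rightarrow> nat \<Rightarrow> real" where
  "matvec n A v i = (\<Sum>k<n. A i k * v k)"

definition diagm :: "(nat \<Rightarrow> real) \<Rightarrow> nat \<Rightarrow> nat \<Rightarrow> real" where
  "diagm w i j = (if i = j then w i else 0)"

definition Amat :: "real \<Rightarrow> real \<Rightarrow> real \<Rightarrow> real \<Rightarrow> nat \<Rightarrow> nat \<Rightarrow> nat \<Rightarrow> nat \<Rightarrow> real" where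
  "Amat xL xR yL yR N1 N2 i j =
     kron N1 idm (diff_mat 2 xL xR N1) i j + kron N1 (diff_mat 2 yL yR N2) idm i j"

definition Bmat :: "real \<Rightarrow> real \<Rightarrow> real \<Rightarrow> real \<Rightarrow> nat \<Rightarrow> nat \<Rightarrow> nat \<Rightarrow> nat \<Rightarrow> real" where
  "Bmat xL xR yL yR N1 N2 i j =
     kron N1 idm (diff_mat 3 xL xR N1) i j
     + kron N1 (diff_mat 2 yL yR N2) (diff_mat 1 xL xR N1) i j"

definition Lmat :: "real \<Rightarrow> real \<Rightarrow> real \<Rightarrow> real \<Rightarrow> nat \<Rightarrow> nat \<Rightarrow> nat \<Rightarrow> nat \<Rightarrow> real" where
  "Lmat xL xR yL yR N1 N2 i j =
     kron N1 idm (diff_mat 1 xL xR N1) i j + kron N1 (diff_mat 1 yL yR N2) idm i j"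

definition Dmat :: "nat \<Rightarrow> real \<Rightarrow> real \<Rightarrow> real \<Rightarrow> real \<Rightarrow> nat \<Rightarrow> nat \<Rightarrow> (nat \<Rightarrow> real) \<Rightarrow> nat \<Rightarrow> nat \<Rightarrow> real" where
  "Dmat p xL xR yL yR N1 N2 W i j =
     (let N = N1 * N2; L = Lmat xL xR yL yR N1 N2; Wp = (\<lambda>k. W k ^ p) in
      Bmat xL xR yL yR N1 N2 i j + L i j
      + (1 / (real p + 2)) * (matmul N (diagm Wp) L i j + matmul N L (diagm Wp) i j))"

definition IA2 :: "real \<Rightarrow> real \<Rightarrow> real \<Rightarrow> real \<Rightarrow> nat \<Rightarrow> nat \<Rightarrow> nat \<Rightarrow> nat \<Rightarrow> real" where
  "IA2 xL xR yL yR N1 N2 i j =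
     idm i j + matmul (N1 * N2) (Amat xL xR yL yR N1 N2) (Amat xL xR yL yR N1 N2) i j"

definition scheme_eq :: "nat \<Rightarrow> real \<Rightarrow> real \<Rightarrow> real \<Rightarrow> real \<Rightarrow> nat \<Rightarrow> nat \<Rightarrow> real \<Rightarrow>
    (nat \<Rightarrow> real) \<Rightarrow> (nat \<Rightarrow> real) \<Rightarrow> (nat \<Rightarrow> real) \<Rightarrow> bool" where
  "scheme_eq p xL xR yL yR N1 N2 \<tau> W U V =
     (\<forall>i < N1 * N2.
        matvec (N1 * N2) (IA2 xL xR yL yR N1 N2) (\<lambda>k. (V k - U k) / \<tau>) i
        + matvec (N1 * N2) (Dmat p xL xR yL yR N1 N2 W) (\<lambda>k. (V k + U k) / 2) i = 0)"

end

theory Submission imports Defs Jordan_Normal_Form.Determinant begin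
lemma trig_basis_cos:
  "trig_basis len N xk x = (\<Sum>l\<in>{- (int N div 2) .. int N div 2}.
      (1 / (real N * a_coef N l)) * cos (real_of_int l * (2 * pi / len) * (x - xk)))"
proof -
  have e: "Re ((1 / complex_of_real (a_coef N l)) *
        exp (\<i> * of_int l * complex_of_real (2 * pi / len) * complex_of_real (x - xk)))
       = (1 / a_coef N l) * cos (real_of_int l * (2 * pi / len) * (x - xk))" for l
  proof -
    have "\<i> * of_int l * complex_of_real (2 * pi / len) * complex_of_real (x - xk)
        = \<i> * complex_of_real (real_of_int l * (2 * pi / len) * (x - xk))" by simp
    then show ?thesis by (simp add: Re_exp Im_exp)
  qed
  have "trig_basis len N xk x = (1/ real N) * Re (\<Sum>l\<in>{- (int N div 2) .. int N div 2}.
        (1 / complex_of_real (a_coef N l)) *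
        exp (\<i> * of_int l * complex_of_real (2 * pi / len) * complex_of_real (x - xk)))"
  proof -
    have e1: "(1 / of_nat N :: complex) = complex_of_real (1 / real N)" by simp
    have e2: "Re (complex_of_real r * z) = r * Re z" for r z by simp
    show ?thesis unfolding trig_basis_def e1 by (rule e2)
  qed
  also have "\<dots> = (1/ real N) * (\<Sum>l\<in>{- (int N div 2) .. int N div 2}.
      (1 / a_coef N l) * cos (real_of_int l * (2 * pi / len) * (x - xk)))"
    by (simp only: Re_sum e)
  finally show ?thesis by (simp add: sum_distrib_left)
qed

lemma deriv_iter:
  fixes c w :: "int \<Rightarrow> real" and S :: "int set"
  shows "(deriv ^^ s) (\<lambda>x. \<Sum>l\<in>S. c l * cos (w l * (x - xk)))
       = (\<lambda>x. \<Sum>l\<in>S. c l * w l ^ s * cos (w l * (x - xk) + real s * pi / 2))"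
proof (induction s)
  case 0
  then show ?case by simp
next
  case (Suc s)
  have d: "((\<lambda>x. \<Sum>l\<in>S. c l * w l ^ s * cos (w l * (x - xk) + real s * pi / 2)) has_field_derivative
        (\<Sum>l\<in>S. c l * w l ^ Suc s * cos (w l * (x - xk) + real (Suc s) * pi / 2))) (at x)" for x
  proof (rule DERIV_sum)
    fix l assume "l \<in> S"
    have "((\<lambda>x. c l * w l ^ s * cos (w l * (x - xk) + real s * pi / 2)) has_field_derivative
        c l * w l ^ s * (- sin (w l * (x - xk) + real s * pi / 2) * (w l * 1))) (at x)"
      by (intro derivative_eq_intros) auto
    moreover have "c l * w l ^ s * (- sin (w l * (x - xk) + real s * pi / 2) * (w l * 1))
        = c l * w l ^ Suc s * cos (w l * (x - xk) + real (Suc s) * pi / 2)"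
    proof -
      have h1: "w l * (x - xk) + real (Suc s) * pi / 2 = (w l * (x - xk) + real s * pi / 2) + pi/2"
        by (simp add: algebra_simps add_divide_distrib)
      have h2: "cos (A + pi/2) = - sin A" for A by (simp add: cos_add)
      show ?thesis by (simp only: h1 h2 power_Suc) (simp add: algebra_simps)
    qed
    ultimately show "((\<lambda>x. c l * w l ^ s * cos (w l * (x - xk) + real s * pi / 2)) has_field_derivative
        c l * w l ^ Suc s * cos (w l * (x - xk) + real (Suc s) * pi / 2)) (at x)" by simp
  qed
  show ?case
    by (simp only: funpow.simps comp_def Suc) (rule ext, rule DERIV_imp_deriv[OF d])
qed

lemma cos_neg_shift: "cos (- t + real s * pi / 2) = (-1) ^ s * cos (t + real s * pi / 2)"
proof -
  have "cos (- t + real s * pi / 2) = cos ((t + real s * pi / 2) - real s * pi)"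
  proof -
    have "(t + real s * pi / 2) - real s * pi = - (- t + real s * pi / 2)" by (simp add: field_simps)
    then show ?thesis by (simp only: cos_minus)
  qed
  also have "\<dots> = (-1) ^ s * cos (t + real s * pi / 2)"
    by (simp only: cos_diff sin_npi cos_npi) simp
  finally show ?thesis .
qed
lemma solve_lin:
  fixes M :: "nat \<Rightarrow> nat \<Rightarrow> real" and N :: nat
  assumes inj: "\<And>v. (\<forall>i<N. matvec N M v i = 0) \<Longrightarrow> (\<forall>i<N. v i = 0)"
  shows "\<exists>V\<in>Vh N. \<forall>i<N. matvec N M V i = b i"
proof -
  define A where "A = Matrix.mat N N (\<lambda>(i,j). M i j)"
  have A: "A \<in> carrier_mat N N" unfolding A_def by simp
  have mv: "(A *\<^sub>v v) $ i = matvec N M (\<lambda>k. if k < N then v $ k else 0) i"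
    if "i < N" "v \<in> carrier_vec N" for v i
    using that unfolding A_def matvec_def
    by (auto simp: mult_mat_vec_def scalar_prod_def row_def intro!: sum.cong)
  have "Determinant.det A \<noteq> 0"
  proof
    assume "Determinant.det A = 0"
    then obtain v where v: "v \<in> carrier_vec N" "v \<noteq> 0\<^sub>v N" "A *\<^sub>v v = 0\<^sub>v N"
      using det_0_iff_vec_prod_zero[OF A] by auto
    have "\<forall>i<N. matvec N M (\<lambda>k. if k < N then v $ k else 0) i = 0"
      using mv[OF _ v(1)] v(3) by (metis index_zero_vec(1))
    then have "\<forall>i<N. (\<lambda>k. if k < N then v $ k else 0) i = 0" by (rule inj)
    then have "v = 0\<^sub>v N" using v(1) by (intro eq_vecI) auto
    with v(2) show False by simp
  qed
  then have "A \<in> Units (ring_mat TYPE(real) N undefined)"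
    by (rule det_non_zero_imp_unit[OF A])
  then obtain B where B: "B \<in> carrier_mat N N" and AB: "A * B = 1\<^sub>m N"
    unfolding Units_def ring_mat_def by auto
  define w where "w = B *\<^sub>v Matrix.vec N b"
  have w: "w \<in> carrier_vec N" unfolding w_def using B by simp
  have Aw: "A *\<^sub>v w = Matrix.vec N b"
    unfolding w_def using A B AB by (simp add: assoc_mult_mat_vec[symmetric])
  show ?thesis
  proof (rule bexI[of _ "\<lambda>k. if k < N then w $ k else 0"])
    show "(\<lambda>k. if k < N then w $ k else 0) \<in> Vh N" unfolding Vh_def by auto
    show "\<forall>i<N. matvec N M (\<lambda>k. if k < N then w $ k else 0) i = b i"
      using mv[OF _ w] Aw by simp
  qed
qed

lemma diff_mat_swap: "diff_mat s L R N j k = (-1) ^ s * diff_mat s L R N k j"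
proof -
  define c where "c = (\<lambda>l. 1 / (real N * a_coef N l))"
  define w where "w = (\<lambda>l. real_of_int l * (2 * pi / (R - L)))"
  define S where "S = {- (int N div 2) .. int N div 2}"
  define nd where "nd = (\<lambda>m. L + real m * ((R - L) / real N))"
  have tb: "trig_basis (R - L) N y = (\<lambda>x. \<Sum>l\<in>S. c l * cos (w l * (x - y)))" for y
    by (rule ext) (simp add: trig_basis_cos c_def w_def S_def)
  have dm: "diff_mat s L R N a b = (\<Sum>l\<in>S. c l * w l ^ s * cos (w l * (nd a - nd b) + real s * pi / 2))" for a b
    unfolding diff_mat_def Let_def nd_def[symmetric] tb deriv_iter by simp
  have "diff_mat s L R N j k = (\<Sum>l\<in>S. c l * w l ^ s * cos (- (w l * (nd k - nd j)) + real s * pi / 2))"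
    unfolding dm by (intro sum.cong) (simp_all add: algebra_simps)
  also have "\<dots> = (-1) ^ s * diff_mat s L R N k j"
    unfolding dm cos_neg_shift by (simp add: sum_distrib_left algebra_simps)
  finally show ?thesis .
qed

lemma kron_swap:
  assumes "\<And>i j. A i j = sa * A j i" "\<And>i j. B i j = sb * B j i"
  shows "kron n A B i j = (sa * sb) * kron n A B j i"
  unfolding kron_def using assms by (metis mult.assoc mult.left_commute)

lemma idm_swap: "idm i j = 1 * idm j i" by (simp add: idm_def)

lemma Amat_sym: "Amat xL xR yL yR N1 N2 i j = Amat xL xR yL yR N1 N2 j i"
  unfolding Amat_def
  using kron_swap[where n=N1 and i=i and j=j, OF idm_swap diff_mat_swap[of 2]]
        kron_swap[where n=N1 and i=i and j=j, OF diff_mat_swap[of 2] idm_swap] by simp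

lemma Bmat_skew: "Bmat xL xR yL yR N1 N2 i j = - Bmat xL xR yL yR N1 N2 j i"
  unfolding Bmat_def
  using kron_swap[where n=N1 and i=i and j=j, OF idm_swap diff_mat_swap[of 3]]
        kron_swap[where n=N1 and i=i and j=j, OF diff_mat_swap[of 2] diff_mat_swap[of 1]] by simp

lemma Lmat_skew: "Lmat xL xR yL yR N1 N2 i j = - Lmat xL xR yL yR N1 N2 j i"
  unfolding Lmat_def
  using kron_swap[where n=N1 and i=i and j=j, OF idm_swap diff_mat_swap[of 1]]
        kron_swap[where n=N1 and i=i and j=j, OF diff_mat_swap[of 1] idm_swap] by simp

lemma if0_mult: "(if P then a else 0) * (b::real) = (if P then a * b else 0)"
  "(b::real) * (if P then a else 0) = (if P then b * a else 0)" by simp_all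

lemma matmul_diag_left: "i < N \<Longrightarrow> matmul N (diagm w) L i j = w i * L i j"
  unfolding matmul_def diagm_def by (simp add: if0_mult)

lemma matmul_diag_right: "j < N \<Longrightarrow> matmul N L (diagm w) i j = L i j * w j"
  unfolding matmul_def diagm_def by (simp add: if0_mult)

lemma Dmat_skew:
  assumes "i < N1 * N2" "j < N1 * N2"
  shows "Dmat p xL xR yL yR N1 N2 W i j = - Dmat p xL xR yL yR N1 N2 W j i"
  unfolding Dmat_def Let_def
  using assms Bmat_skew[of xL xR yL yR N1 N2 i j] Lmat_skew[of xL xR yL yR N1 N2 i j]
  by (simp add: matmul_diag_left matmul_diag_right algebra_simps)

lemma skew_quad:
  assumes "\<And>i j. i < N \<Longrightarrow> j < N \<Longrightarrow> M i j = - M j i"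
  shows "(\<Sum>i<N. v i * matvec N M v i) = (0::real)"
proof -
  let ?S = "\<Sum>i<N. \<Sum>k<N. v i * M i k * v k"
  have e: "(\<Sum>i<N. v i * matvec N M v i) = ?S"
    unfolding matvec_def by (simp only: sum_distrib_left mult.assoc)
  have "?S = (\<Sum>k<N. \<Sum>i<N. v i * M i k * v k)" by (rule sum.swap)
  also have "\<dots> = (\<Sum>k<N. \<Sum>i<N. - (v k * M k i * v i))"
  proof (rule sum.cong[OF refl], rule sum.cong[OF refl])
    fix k i assume "k \<in> {..<N}" "i \<in> {..<N}"
    then have "M i k = - M k i" using assms[of i k] by blast
    then show "v i * M i k * v k = - (v k * M k i * v i)" by simp
  qed
  also have "\<dots> = - ?S" by (simp only: sum_negf)
  finally show ?thesis using e by linarith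
qed

lemma sym_quad:
  fixes A :: "nat \<Rightarrow> nat \<Rightarrow> real"
  assumes "\<And>i j. A i j = A j i"
  shows "(\<Sum>i<N. v i * matvec N (matmul N A A) v i) \<ge> 0"
proof -
  have "(\<Sum>i<N. v i * matvec N (matmul N A A) v i) = (\<Sum>i<N. \<Sum>k<N. \<Sum>m<N. v i * A i m * A m k * v k)"
    unfolding matvec_def matmul_def by (simp only: sum_distrib_left sum_distrib_right mult.assoc[symmetric])
  also have "\<dots> = (\<Sum>i<N. \<Sum>m<N. \<Sum>k<N. v i * A i m * A m k * v k)"
    by (rule sum.cong[OF refl], rule sum.swap)
  also have "\<dots> = (\<Sum>m<N. \<Sum>i<N. \<Sum>k<N. v i * A i m * A m k * v k)"
    by (rule sum.swap)
  also have "\<dots> = (\<Sum>m<N. (\<Sum>i<N. A m i * v i) * (\<Sum>k<N. A m k * v k))"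
    unfolding sum_product
  proof (rule sum.cong[OF refl], rule sum.cong[OF refl], rule sum.cong[OF refl])
    fix m i k
    show "v i * A i m * A m k * v k = A m i * v i * (A m k * v k)"
      using assms[of i m] by (simp only: mult.commute mult.left_commute)
  qed
  also have "\<dots> = (\<Sum>m<N. (\<Sum>i<N. A m i * v i)^2)" by (simp only: power2_eq_square)
  also have "\<dots> \<ge> 0" by (intro sum_nonneg zero_le_power2)
  finally show ?thesis .
qed

lemma idm_mv: "i < N \<Longrightarrow> matvec N idm v i = v i"
  unfolding matvec_def idm_def by (simp only: if0_mult mult_1 sum.delta' finite_lessThan lessThan_iff if_True)

lemma IA2_quad:
  "(\<Sum>i<N1*N2. v i * matvec (N1*N2) (IA2 xL xR yL yR N1 N2) v i) \<ge> (\<Sum>i<N1*N2. v i ^ 2)"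
proof -
  let ?N = "N1*N2" and ?A = "Amat xL xR yL yR N1 N2"
  have h: "matvec ?N (IA2 xL xR yL yR N1 N2) v i = matvec ?N idm v i + matvec ?N (matmul ?N ?A ?A) v i" for i
    unfolding matvec_def IA2_def by (simp only: distrib_right sum.distrib)
  have "(\<Sum>i<?N. v i * matvec ?N (IA2 xL xR yL yR N1 N2) v i)
      = (\<Sum>i<?N. v i ^ 2 + v i * matvec ?N (matmul ?N ?A ?A) v i)"
  proof (rule sum.cong[OF refl])
    fix i show "i \<in> {..<?N} \<Longrightarrow> v i * matvec ?N (IA2 xL xR yL yR N1 N2) v i = v i ^ 2 + v i * matvec ?N (matmul ?N ?A ?A) v i"
    proof -
      assume "i \<in> {..<?N}"
      then have "matvec ?N idm v i = v i" by (intro idm_mv) simp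
      then show ?thesis by (simp only: h power2_eq_square distrib_left)
    qed
  qed
  also have "\<dots> = (\<Sum>i<?N. v i ^ 2) + (\<Sum>i<?N. v i * matvec ?N (matmul ?N ?A ?A) v i)"
    by (rule sum.distrib)
  finally have e: "(\<Sum>i<?N. v i * matvec ?N (IA2 xL xR yL yR N1 N2) v i)
      = (\<Sum>i<?N. v i ^ 2) + (\<Sum>i<?N. v i * matvec ?N (matmul ?N ?A ?A) v i)" .
  have "(\<Sum>i<?N. v i * matvec ?N (matmul ?N ?A ?A) v i) \<ge> 0"
    by (rule sym_quad) (rule Amat_sym)
  then show ?thesis unfolding e by simp
qed

lemma matvec_lin1:
  "matvec N (\<lambda>i k. a * P i k + b * Q i k) v i = a * matvec N P v i + b * matvec N Q v i"
  unfolding matvec_def by (simp add: distrib_right sum.distrib sum_distrib_left mult.assoc)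

lemma matvec_lin2:
  "matvec N M (\<lambda>k. V1 k - V2 k) i = matvec N M V1 i - matvec N M V2 i"
  unfolding matvec_def by (simp add: right_diff_distrib sum_subtractf)

lemma matvec_lin3:
  "matvec N M (\<lambda>k. a * V1 k + b * V2 k) i = a * matvec N M V1 i + b * matvec N M V2 i"
  unfolding matvec_def by (simp add: distrib_left sum.distrib sum_distrib_left mult.left_commute)

lemmas matvec_lin = matvec_lin1 matvec_lin2 matvec_lin3
lemma step_unique:
  assumes tau: "\<tau> > 0"
  shows "\<exists>!V\<in>Vh (N1 * N2). scheme_eq p xL xR yL yR N1 N2 \<tau> W U V"
proof -
  let ?N = "N1 * N2"
  let ?I = "IA2 xL xR yL yR N1 N2" and ?D = "Dmat p xL xR yL yR N1 N2 W"
  define M where "M = (\<lambda>i k. (1/\<tau>) * ?I i k + (1/2) * ?D i k)"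
  define Mr where "Mr = (\<lambda>i k. (1/\<tau>) * ?I i k + (- 1/2) * ?D i k)"
  have eqv: "scheme_eq p xL xR yL yR N1 N2 \<tau> W U V \<longleftrightarrow>
      (\<forall>i<?N. matvec ?N M V i = matvec ?N Mr U i)" for V
  proof -
    have "matvec ?N ?I (\<lambda>k. (V k - U k) / \<tau>) i + matvec ?N ?D (\<lambda>k. (V k + U k) / 2) i
        = matvec ?N M V i - matvec ?N Mr U i" for i
    proof -
      have a: "(\<lambda>k. (V k - U k) / \<tau>) = (\<lambda>k. (1/\<tau>) * V k + (-1/\<tau>) * U k)"
        by (rule ext) (simp add: diff_divide_distrib)
      have b: "(\<lambda>k. (V k + U k) / 2) = (\<lambda>k. (1/2) * V k + (1/2) * U k)"
        by (rule ext) simp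
      show ?thesis unfolding a b M_def Mr_def matvec_lin by (simp add: algebra_simps)
    qed
    then show ?thesis unfolding scheme_eq_def by simp
  qed
  have inj: "\<forall>i<?N. v i = 0" if h: "\<forall>i<?N. matvec ?N M v i = 0" for v
  proof -
    have "0 = (\<Sum>i<?N. v i * matvec ?N M v i)" using h by simp
    also have "\<dots> = (\<Sum>i<?N. (1/\<tau>) * (v i * matvec ?N ?I v i) + (1/2) * (v i * matvec ?N ?D v i))"
      unfolding M_def matvec_lin by (intro sum.cong refl) (simp add: distrib_left mult.left_commute)
    also have "\<dots> = (1/\<tau>) * (\<Sum>i<?N. v i * matvec ?N ?I v i) + (1/2) * (\<Sum>i<?N. v i * matvec ?N ?D v i)"
      by (simp only: sum.distrib sum_distrib_left)
    also have "(\<Sum>i<?N. v i * matvec ?N ?D v i) = 0"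
      by (rule skew_quad) (rule Dmat_skew)
    finally have "(\<Sum>i<?N. v i * matvec ?N ?I v i) = 0" using tau by simp
    with IA2_quad[of v N1 N2 xL xR yL yR] have "(\<Sum>i<?N. v i ^ 2) \<le> 0" by simp
    moreover have "(\<Sum>i<?N. v i ^ 2) \<ge> 0" by (intro sum_nonneg) simp
    ultimately have "(\<Sum>i<?N. v i ^ 2) = 0" by simp
    then have "\<forall>i\<in>{..<?N}. v i ^ 2 = 0" by (subst (asm) sum_nonneg_eq_0_iff) auto
    then show ?thesis by simp
  qed
  obtain V where V: "V \<in> Vh ?N" "\<forall>i<?N. matvec ?N M V i = matvec ?N Mr U i"
    using solve_lin[of ?N M "\<lambda>i. matvec ?N Mr U i"] inj by blast
  show ?thesis
  proof (rule ex1I[of _ V])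
    show "V \<in> Vh ?N \<and> scheme_eq p xL xR yL yR N1 N2 \<tau> W U V" using V eqv by simp
    fix V2 assume V2: "V2 \<in> Vh ?N \<and> scheme_eq p xL xR yL yR N1 N2 \<tau> W U V2"
    have "\<forall>i<?N. matvec ?N M (\<lambda>k. V2 k - V k) i = 0"
      using V2 V eqv by (simp add: matvec_lin)
    then have "\<forall>i<?N. V2 i - V i = 0" by (rule inj)
    then show "V2 = V"
    proof (intro ext)
      fix k assume h: "\<forall>i<?N. V2 i - V i = 0"
      show "V2 k = V k"
      proof (cases "k < ?N")
        case True then show ?thesis using h by simp
      next
        case False then show ?thesis using V(1) V2 unfolding Vh_def by simp
      qed
    qed
  qed
qed

theorem theorem3p2:
  fixes p N1 N2 :: nat and xL xR yL yR \<tau> :: real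
  assumes "p \<ge> 1" and "xL < xR" and "yL < yR"
    and "even N1" and "even N2" and "N1 > 0" and "N2 > 0" and "\<tau> > 0"
  shows "(\<forall>U0\<in>Vh (N1 * N2). \<exists>!U1\<in>Vh (N1 * N2).
            scheme_eq p xL xR yL yR N1 N2 \<tau> U0 U0 U1)
       \<and> (\<forall>n::nat \<ge> 1. \<forall>Uold\<in>Vh (N1 * N2). \<forall>Ucur\<in>Vh (N1 * N2). \<exists>!Unext\<in>Vh (N1 * N2).
            scheme_eq p xL xR yL yR N1 N2 \<tau> (\<lambda>k. (3 * Ucur k - Uold k) / 2) Ucur Unext)"
  using assms(8) by (intro conjI ballI allI impI step_unique)
end
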